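(* Let $p,q,r$ be integers with $1<p<q<r$, $p$ odd and $pq+pr-qr=1$. Then $$\max_{1\le m\le n_p}F_{p,q}(1,m)=F_{p,q}\big(1,\,t_{p,q}+\min\{\alpha_{p,q},1\}\big)=(t_{p,q}+1)(n_p+\alpha_{p,q}).$$
   Context: $n_p=(p-1)/2$; $t_{p,q}$, $\alpha_{p,q}$ are quotient and remainder of $n_p$ divided by $q-p$ ($n_p=t_{p,q}(q-p)+\alpha_{p,q}$, $0\le\alpha_{p,q}<q-p$). $F_{p,q}(x,y)=\frac{1}{4}\left(-(q+r)x^2+4qxy-4(q-p)y^2-4y+q+r\right)$; $m$ ranges over integers. *)

theory Defs
  imports Complex_Main
begin

definition n_p :: "int \<Rightarrow> int" where
  "n_p p = (p - 1) div 2"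

definition t_pq :: "int \<Rightarrow> int \<Rightarrow> int" where
  "t_pq p q = n_p p div (q - p)"

definition alpha_pq :: "int \<Rightarrow> int \<Rightarrow> int" where
  "alpha_pq p q = n_p p mod (q - p)"

definition F_pq :: "int \<Rightarrow> int \<Rightarrow> int \<Rightarrow> int \<Rightarrow> int \<Rightarrow> real" where
  "F_pq p q r x y = (1/4) * (- real_of_int (q + r) * real_of_int x ^ 2
      + 4 * real_of_int q * real_of_int x * real_of_int y
      - 4 * real_of_int (q - p) * real_of_int y ^ 2 - 4 * real_of_int y + real_of_int (q + r))"

end

theory Submission
  imports Defs
begin

lemma key:
  fixes d c m m0 :: int
  assumes d: "d > 0" and lo: "c \<ge> d * (2*m0 - 1)" and hi: "c \<le> d * (2*m0 + 1)"
  shows "m * (c - d*m) \<le> m0 * (c - d*m0)"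
proof -
  have eq: "m0 * (c - d*m0) - m * (c - d*m) = (m0 - m) * (c - d*(m0+m))"
    by (simp add: algebra_simps)
  consider "m < m0" | "m = m0" | "m > m0" by linarith
  then have "(m0 - m) * (c - d*(m0+m)) \<ge> 0"
  proof cases
    case 1
    have "d*(m0+m) \<le> d*(2*m0-1)" using 1 d by (intro mult_left_mono) auto
    then show ?thesis using 1 lo by (intro mult_nonneg_nonneg) auto
  next
    case 2 then show ?thesis by simp
  next
    case 3
    have "d*(m0+m) \<ge> d*(2*m0+1)" using 3 d by (intro mult_left_mono) auto
    then show ?thesis using 3 hi by (intro mult_nonpos_nonpos) auto
  qed
  then show ?thesis using eq by linarith
qed

lemma Fval: "F_pq p q r 1 m = real_of_int (m * (q - 1 - (q-p)*m))"
  unfolding F_pq_def by (simp add: algebra_simps power2_eq_square)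

theorem proposition3p5:
  fixes p q r :: int
  assumes "1 < p" "p < q" "q < r" "odd p" "p * q + p * r - q * r = 1"
  shows "Max ((\<lambda>m. F_pq p q r 1 m) ` {1..n_p p})
           = F_pq p q r 1 (t_pq p q + min (alpha_pq p q) 1)
       \<and> F_pq p q r 1 (t_pq p q + min (alpha_pq p q) 1)
           = real_of_int ((t_pq p q + 1) * (n_p p + alpha_pq p q))"
proof -
  define d where "d = q - p"
  define n where "n = n_p p"
  define t where "t = t_pq p q"
  define a where "a = alpha_pq p q"
  define m0 where "m0 = t + min a 1"
  have d: "d > 0" using assms unfolding d_def by simp
  have pn: "p = 2*n + 1" using assms(4) unfolding n_def n_p_def by presburger
  have n1: "n \<ge> 1" using pn assms(1) by linarith
  have nd: "n = t*d + a" unfolding n_def t_def a_def t_pq_def alpha_pq_def d_def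
    by (metis mult.commute div_mult_mod_eq)
  have a0: "0 \<le> a" "a < d" unfolding a_def alpha_pq_def d_def using d d_def by auto
  have t0: "t \<ge> 0" unfolding t_def t_pq_def n_def[symmetric] d_def[symmetric]
    using n1 d by (simp add: pos_imp_zdiv_nonneg_iff)
  have qc: "q - 1 = 2*n + d" using pn d_def by simp
  have bounds: "d*(2*m0-1) \<le> 2*n+d \<and> 2*n+d \<le> d*(2*m0+1) \<and> 1 \<le> m0 \<and> m0 \<le> n
     \<and> m0 * (2*n + d - d*m0) = (t+1)*(n+a)"
  proof (cases "a = 0")
    case True
    then have m0: "m0 = t" unfolding m0_def by simp
    have "t \<ge> 1" using True nd n1 t0 by (cases "t = 0") auto
    moreover have "t \<le> t*d" using d t0 by (simp add: mult_le_cancel_left1)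
    ultimately show ?thesis using True m0 nd by (simp add: algebra_simps)
  next
    case False
    then have m0: "m0 = t + 1" unfolding m0_def using a0 by simp
    have "t \<le> t*d" using d t0 by (simp add: mult_le_cancel_left1)
    then show ?thesis using False m0 nd a0 t0 by (simp add: algebra_simps)
  qed
  have Fm: "\<And>m. F_pq p q r 1 m = real_of_int (m * (2*n + d - d*m))"
    using Fval qc d_def by simp
  have "Max ((\<lambda>m. F_pq p q r 1 m) ` {1..n}) = F_pq p q r 1 m0"
  proof (rule Max_eqI)
    show "finite ((\<lambda>m. F_pq p q r 1 m) ` {1..n})" by simp
    show "F_pq p q r 1 m0 \<in> (\<lambda>m. F_pq p q r 1 m) ` {1..n}" using bounds by auto
    fix y assume "y \<in> (\<lambda>m. F_pq p q r 1 m) ` {1..n}"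
    then obtain m where "y = F_pq p q r 1 m" by auto
    moreover have "m * (2*n + d - d*m) \<le> m0 * (2*n + d - d*m0)"
      using key[OF d] bounds by blast
    ultimately show "y \<le> F_pq p q r 1 m0" unfolding Fm
      by (metis of_int_le_iff)
  qed
  moreover have "F_pq p q r 1 m0 = real_of_int ((t+1)*(n+a))"
  proof -
    have "m0 * (2*n + d - d*m0) = (t+1)*(n+a)" using bounds by blast
    then show ?thesis by (simp only: Fm)
  qed
  ultimately show ?thesis unfolding n_def t_def a_def m0_def by simp
qed

end
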